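(* Consider the following class of dissipative quantum systems. A system consists of $N\ge1$ non-interacting subsystems; subsystem $K$ has $n_K\ge1$ system qubits and one ancilla qubit, labelled $i_j^K$, $j=0,\dots,n_K$ ($j=0$ the ancilla), with Hamiltonian $$H_K=\sum_{j_1=0}^{n_K}\sum_{j_2=j_1+1}^{n_K}J_K^{j_1,j_2}\big(X^{(i^K_{j_1})}X^{(i^K_{j_2})}+Y^{(i^K_{j_1})}Y^{(i^K_{j_2})}\big)+\sum_{j=0}^{n_K}\alpha Z^{(i^K_j)},$$ with real constants $J_K^{j_1,j_2},\alpha$, and a sampling time $\tau>0$. For input $u\in[0,1]$ define the CPTP map on the system qubits of subsystem $K$ by $T_K(u)\rho={\rm Tr}_{i_0^K}\big(e^{-iH_K\tau}(\rho\otimes\rho_{i_0}(u))e^{iH_K\tau}\big)$, where $\rho_{i_0}(u)=u|0\rangle\langle0|+(1-u)|1\rangle\langle1|$ and ${\rm Tr}_{i_0^K}$ is the partial trace over the ancilla. The overall dynamics is $\rho_k=T(u_k)\rho_{k-1}$ with $T(u)=\bigotimes_{K=1}^N T_K(u)$ acting on product states, and the output is $\bar y_k=h(\rho_k)$ where $h$ is a real polynomial (any degree, with constant term) in ${\rm Tr}(\rho_k Z^{(i)})$, $i=1,\dots,n$, ranging over all $n=\sum_K n_K$ system qubits. Let $\mathcal{M}_S$ be the set of filters induced by all such systems for which each $T_K$ satisfies: there is $0<\epsilon_K\le1$ with $\sup_{A\in H_0(2^{n_K}),A\ne0}\|T_K(u)A\|_2/\|A\|_2\le1-\epsilon_K$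 for all $u\in[0,1]$. Then for any null sequence $w$, the corresponding family of functionals $\mathcal{F}_S$ is dense in $C(K_1^-([0,1]),\|\cdot\|_w)$ (with respect to the supremum norm).
   Context: $X^{(q)},Y^{(q)},Z^{(q)}$ are the Pauli operators on qubit $q$. $H_0(m)$ is the space of traceless Hermitian $m\times m$ matrices and $\|\cdot\|_2$ the Schatten 2-norm. $K_1^-([0,1])$ is the set of real sequences $\{u_k\}_{k\le0}$ with $u_k\in[0,1]$. The filter induced by a system is $M(u)_k=h\big(\lim_{N\to\infty}T(u_k)T(u_{k-1})\cdots T(u_{k-N})\rho_{-N}\big)$ for bi-infinite input sequences $u$ with values in $[0,1]$ (limit independent of the density operators $\rho_{-N}$), and its functional is $F(u_-)=M(u)_0$ for any $u$ extending $u_-\in K_1^-([0,1])$. A null sequence is a decreasing $w:\{0,1,\dots\}\to(0,1]$ with $w_k\to0$; $\|u\|_w=\sup_{k\le0}|u_k|w_{-k}$; $C(K_1^-([0,1]),\|\cdot\|_w)$ is the set of real-valued functionals continuous with respect to $\|\cdot\|_w$. *)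

theory Defs
  imports "Jordan_Normal_Form.Matrix" Complex_Main
begin

text \<open>Matrices are Jordan_Normal_Form complex matrices. On m qubits the
 computational basis index i in [0, 2^m) encodes qubit q by bit q of i
 (bit value 0 = state |0>, 1 = state |1>).\<close>

definition bitv :: "nat \<Rightarrow> nat \<Rightarrow> bool" where
  "bitv q i = odd (i div 2 ^ q)"

definition flipq :: "nat \<Rightarrow> nat \<Rightarrow> nat" where
  "flipq q i = (if bitv q i then i - 2 ^ q else i + 2 ^ q)"

definition pauliX :: "nat \<Rightarrow> nat \<Rightarrow> complex mat" where
  "pauliX m q = mat (2 ^ m) (2 ^ m) (\<lambda>(r, c). if c = flipq q r then 1 else 0)"

definition pauliY :: "nat \<Rightarrow> nat \<Rightarrow> complex mat" where
  "pauliY m q = mat (2 ^ m) (2 ^ m)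
     (\<lambda>(r, c). if c = flipq q r then (if bitv q r then \<i> else - \<i>) else 0)"

definition pauliZ :: "nat \<Rightarrow> nat \<Rightarrow> complex mat" where
  "pauliZ m q = mat (2 ^ m) (2 ^ m)
     (\<lambda>(r, c). if r = c then (if bitv q r then -1 else 1) else 0)"

definition mtrace :: "complex mat \<Rightarrow> complex" where
  "mtrace A = (\<Sum>i<dim_row A. A $$ (i, i))"

definition mexp :: "complex mat \<Rightarrow> complex mat" where
  "mexp A = mat (dim_row A) (dim_col A)
     (\<lambda>(r, c). \<Sum>k. (A ^\<^sub>m k) $$ (r, c) / fact k)"

definition kron :: "complex mat \<Rightarrow> complex mat \<Rightarrow> complex mat" where
  "kron A B = mat (dim_row A * dim_row B) (dim_col A * dim_col B)
     (\<lambda>(r, c). A $$ (r div dim_row B, c div dim_col B) * B $$ (r mod dim_row B, c mod dim_col B))"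

text \<open>Partial trace over the last tensor factor, a single qubit (the ancilla).\<close>
definition ptrace_anc :: "complex mat \<Rightarrow> complex mat" where
  "ptrace_anc B = mat (dim_row B div 2) (dim_col B div 2)
     (\<lambda>(s, t). B $$ (2 * s, 2 * t) + B $$ (2 * s + 1, 2 * t + 1))"

definition anc_state :: "real \<Rightarrow> complex mat" where
  "anc_state u = mat 2 2 (\<lambda>(r, c). if r = 0 \<and> c = 0 then complex_of_real u
      else if r = 1 \<and> c = 1 then complex_of_real (1 - u) else 0)"

text \<open>Hamiltonian H_K of a subsystem with n system qubits (labels 1..n) and the
 ancilla (label 0), on n+1 qubits; the ancilla is the last tensor factor, so
 qubit j corresponds to bit j of the basis index of the n+1 qubit register.\<close>
definition hamK :: "nat \<Rightarrow> (nat \<Rightarrow> nat \<Rightarrow> real) \<Rightarrow> real \<Rightarrow> complex mat" where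
  "hamK n J \<alpha> = mat (2 ^ (n + 1)) (2 ^ (n + 1)) (\<lambda>(r, c).
     (\<Sum>j1\<in>{0..n}. \<Sum>j2\<in>{j1<..n}. complex_of_real (J j1 j2) *
        ((pauliX (n + 1) j1 * pauliX (n + 1) j2 + pauliY (n + 1) j1 * pauliY (n + 1) j2) $$ (r, c)))
     + (\<Sum>j\<in>{0..n}. complex_of_real \<alpha> * (pauliZ (n + 1) j $$ (r, c))))"

definition chanK :: "nat \<Rightarrow> (nat \<Rightarrow> nat \<Rightarrow> real) \<Rightarrow> real \<Rightarrow> real \<Rightarrow> real \<Rightarrow> complex mat \<Rightarrow> complex mat" where
  "chanK n J \<alpha> \<tau> u \<rho> =
     ptrace_anc (mexp ((- \<i> * complex_of_real \<tau>) \<cdot>\<^sub>m hamK n J \<alpha>) * kron \<rho> (anc_state u)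
                 * mexp ((\<i> * complex_of_real \<tau>) \<cdot>\<^sub>m hamK n J \<alpha>))"

definition hsnorm :: "complex mat \<Rightarrow> real" where
  "hsnorm A = sqrt (\<Sum>i<dim_row A. \<Sum>j<dim_col A. (cmod (A $$ (i, j)))\<^sup>2)"

definition hermitian_mat :: "nat \<Rightarrow> complex mat \<Rightarrow> bool" where
  "hermitian_mat d A \<longleftrightarrow> A \<in> carrier_mat d d \<and>
     (\<forall>i<d. \<forall>j<d. A $$ (j, i) = cnj (A $$ (i, j)))"

definition density :: "nat \<Rightarrow> complex mat \<Rightarrow> bool" where
  "density d \<rho> \<longleftrightarrow> \<rho> \<in> carrier_mat d d \<and> mtrace \<rho> = 1 \<and>
     (\<forall>x :: nat \<Rightarrow> complex.
        Im (\<Sum>i<d. \<Sum>j<d. cnj (x i) * \<rho> $$ (i, j) * x j) = 0 \<and>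
        Re (\<Sum>i<d. \<Sum>j<d. cnj (x i) * \<rho> $$ (i, j) * x j) \<ge> 0)"

text \<open>Condition on T_K: exists 0 < eps <= 1 with
 sup over nonzero traceless Hermitian A of ||T_K(u)A||_2/||A||_2 <= 1 - eps, for all u in [0,1]
 (the bound on the supremum written out as a bound on every quotient).\<close>
definition contractive_K :: "nat \<Rightarrow> (nat \<Rightarrow> nat \<Rightarrow> real) \<Rightarrow> real \<Rightarrow> real \<Rightarrow> bool" where
  "contractive_K n J \<alpha> \<tau> \<longleftrightarrow> (\<exists>\<epsilon>. 0 < \<epsilon> \<and> \<epsilon> \<le> 1 \<and>
     (\<forall>u\<in>{0..1}. \<forall>A. hermitian_mat (2 ^ n) A \<and> mtrace A = 0 \<and> A \<noteq> 0\<^sub>m (2 ^ n) (2 ^ n) \<longrightarrow>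
        hsnorm (chanK n J \<alpha> \<tau> u A) / hsnorm A \<le> 1 - \<epsilon>))"

text \<open>Left-infinite input sequences u_- in K_1^-([0,1]) are represented by
 v :: nat => real with v m = u_{-m}.\<close>
definition K1 :: "(nat \<Rightarrow> real) set" where
  "K1 = {v. \<forall>m. v m \<in> {0..1}}"

text \<open>Evolution T(u_0) T(u_{-1}) ... T(u_{-s}) rho for one subsystem.\<close>
definition evolve :: "(real \<Rightarrow> complex mat \<Rightarrow> complex mat) \<Rightarrow> (nat \<Rightarrow> real) \<Rightarrow> nat \<Rightarrow> complex mat \<Rightarrow> complex mat" where
  "evolve \<Phi> v s \<rho> = foldr (\<lambda>m acc. \<Phi> (v m) acc) [0..<Suc s] \<rho>"

text \<open>Tr(rho Z^(j)) for system qubit j (1 <= j <= n) of a subsystem, whose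
 system register has n qubits with qubit j at bit j-1.\<close>
definition zexp :: "nat \<Rightarrow> nat \<Rightarrow> complex mat \<Rightarrow> real" where
  "zexp n j \<rho> = Re (mtrace (\<rho> * pauliZ n (j - 1)))"

definition poly_out :: "nat \<Rightarrow> (nat \<Rightarrow> nat) \<Rightarrow> ((nat \<times> nat \<Rightarrow> nat) set) \<Rightarrow> ((nat \<times> nat \<Rightarrow> nat) \<Rightarrow> real)
    \<Rightarrow> (nat \<times> nat \<Rightarrow> real) \<Rightarrow> real" where
  "poly_out N nK Mons c x = (\<Sum>e\<in>Mons. c e * (\<Prod>K<N. \<Prod>j\<in>{1..nK K}. x (K, j) ^ e (K, j)))"

text \<open>F is the functional induced by the system: for every input u_- and every choice of
 (product) initial density operators rho_{-s}, the outputs h(T(u_0)...T(u_{-s}) rho_{-s})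
 converge to F(u_-).\<close>
definition sys_functional ::
  "nat \<Rightarrow> (nat \<Rightarrow> nat) \<Rightarrow> (nat \<Rightarrow> nat \<Rightarrow> nat \<Rightarrow> real) \<Rightarrow> real \<Rightarrow> real \<Rightarrow>
   ((nat \<times> nat \<Rightarrow> nat) set) \<Rightarrow> ((nat \<times> nat \<Rightarrow> nat) \<Rightarrow> real) \<Rightarrow> ((nat \<Rightarrow> real) \<Rightarrow> real) \<Rightarrow> bool" where
  "sys_functional N nK J \<alpha> \<tau> Mons c F \<longleftrightarrow>
     (\<forall>v\<in>K1. \<forall>\<rho>0 :: nat \<Rightarrow> nat \<Rightarrow> complex mat.
        (\<forall>s. \<forall>K<N. density (2 ^ nK K) (\<rho>0 s K)) \<longrightarrow>
        (\<lambda>s. poly_out N nK Mons c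
               (\<lambda>(K, j). zexp (nK K) j (evolve (chanK (nK K) (J K) \<alpha> \<tau>) v s (\<rho>0 s K))))
          \<longlonglongrightarrow> F v)"

definition FS :: "((nat \<Rightarrow> real) \<Rightarrow> real) set" where
  "FS = {F. \<exists>N nK J \<alpha> \<tau> Mons c. N \<ge> 1 \<and> (\<forall>K<N. nK K \<ge> 1) \<and> \<tau> > 0 \<and> finite Mons \<and>
          (\<forall>K<N. contractive_K (nK K) (J K) \<alpha> \<tau>) \<and>
          sys_functional N nK J \<alpha> \<tau> Mons c F}"

definition null_seq :: "(nat \<Rightarrow> real) \<Rightarrow> bool" where
  "null_seq w \<longleftrightarrow> (\<forall>k. w (Suc k) \<le> w k) \<and> (\<forall>k. 0 < w k \<and> w k \<le> 1) \<and> w \<longlonglongrightarrow> 0"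

definition wnorm :: "(nat \<Rightarrow> real) \<Rightarrow> (nat \<Rightarrow> real) \<Rightarrow> real" where
  "wnorm w v = (SUP m. \<bar>v m\<bar> * w m)"

definition cont_w :: "(nat \<Rightarrow> real) \<Rightarrow> ((nat \<Rightarrow> real) \<Rightarrow> real) \<Rightarrow> bool" where
  "cont_w w f \<longleftrightarrow> (\<forall>u\<in>K1. \<forall>e>0. \<exists>\<delta>>0. \<forall>v\<in>K1.
      wnorm w (\<lambda>m. v m - u m) < \<delta> \<longrightarrow> \<bar>f v - f u\<bar> < e)"

end

theory Submission imports Defs "HOL-Analysis.Analysis" begin
abbreviation jmat :: "nat \<Rightarrow> nat \<Rightarrow> (nat \<times> nat \<Rightarrow> 'a) \<Rightarrow> 'a Matrix.mat" where "jmat \<equiv> Matrix.mat"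

lemma less4_cases: "(i::nat) < 4 \<Longrightarrow> i = 0 \<or> i = 1 \<or> i = 2 \<or> i = 3" by auto

lemma sum4: "(\<Sum>k\<in>{0..<4::nat}. f k) = f 0 + f 1 + f 2 + f (3::nat)"
  by (simp add: numeral_eq_Suc atLeast0LessThan lessThan_Suc add_ac)

lemma bits: "bitv 0 0 = False" "bitv 0 1 = True" "bitv 0 2 = False" "bitv 0 3 = True"
  "bitv 1 0 = False" "bitv 1 1 = False" "bitv 1 2 = True" "bitv 1 3 = True"
  by (simp_all add: Defs.bitv_def)
lemma flips: "flipq 0 0 = 1" "flipq 0 1 = 0" "flipq 0 2 = 3" "flipq 0 3 = 2"
  "flipq 1 0 = 2" "flipq 1 1 = 3" "flipq 1 2 = 0" "flipq 1 3 = 1"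
  by (simp_all add: Defs.flipq_def bits[simplified])

lemma flip_lt4: "r < 4 \<Longrightarrow> flipq 0 r < 4" "r < 4 \<Longrightarrow> flipq 1 r < 4"
  by (drule less4_cases, auto simp: flips[simplified])+

lemma mult_single_entry:
  fixes A B :: "'a::comm_ring_1 Matrix.mat"
  assumes "A \<in> carrier_mat n n" "B \<in> carrier_mat n n" "r < n" "c < n" "g < n"
    "\<And>k. k < n \<Longrightarrow> k \<noteq> g \<Longrightarrow> A $$ (r,k) = 0"
  shows "(A * B) $$ (r,c) = A $$ (r,g) * B $$ (g,c)"
proof -
  have "(A * B) $$ (r,c) = (\<Sum>k\<in>{0..<n}. A $$ (r,k) * B $$ (k,c))"
    using assms by (simp add: scalar_prod_def)
  also have "\<dots> = (\<Sum>k\<in>{0..<n}. if k = g then A $$ (r,g) * B $$ (g,c) else 0)"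
    by (rule sum.cong) (use assms in auto)
  also have "\<dots> = A $$ (r,g) * B $$ (g,c)" using assms by simp
  finally show ?thesis .
qed

lemma XX: "(pauliX 2 0 * pauliX 2 1) $$ (i,j) = (if j = flipq 1 (flipq 0 i) then 1 else 0)" if "i<4" "j<4"
proof -
  have "(pauliX 2 0 * pauliX 2 1) $$ (i,j) = pauliX 2 0 $$ (i, flipq 0 i) * pauliX 2 1 $$ (flipq 0 i, j)"
    by (rule mult_single_entry[where n=4]) (use that flip_lt4 in \<open>auto simp: Defs.pauliX_def\<close>)
  then show ?thesis using that flip_lt4 by (simp add: Defs.pauliX_def)
qed

lemma YY: "(pauliY 2 0 * pauliY 2 1) $$ (i,j) = (if j = flipq 1 (flipq 0 i) then (if bitv 0 i = bitv 1 i then -1 else 1) else 0)" if "i<4" "j<4"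
proof -
  have "(pauliY 2 0 * pauliY 2 1) $$ (i,j) = pauliY 2 0 $$ (i, flipq 0 i) * pauliY 2 1 $$ (flipq 0 i, j)"
    by (rule mult_single_entry[where n=4]) (use that flip_lt4 in \<open>auto simp: Defs.pauliY_def\<close>)
  then show ?thesis using that flip_lt4 
    apply (simp add: Defs.pauliY_def)
    apply (insert that, drule less4_cases)
    apply (elim disjE; simp add: flips[simplified] bits[simplified])
    done
qed

lemma pdims[simp]: "dim_row (pauliX m q) = 2^m" "dim_col (pauliX m q) = 2^m"
  "dim_row (pauliY m q) = 2^m" "dim_col (pauliY m q) = 2^m"
  "dim_row (pauliZ m q) = 2^m" "dim_col (pauliZ m q) = 2^m"
  by (simp_all add: Defs.pauliX_def Defs.pauliY_def Defs.pauliZ_def)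

definition Hm :: "complex \<Rightarrow> complex Matrix.mat" where
  "Hm a = jmat 4 4 (\<lambda>(r,c). if (r=1\<and>c=2)\<or>(r=2\<and>c=1) then a else 0)"

lemma XXYY: assumes "i<4" "j<4"
  shows "(pauliX 2 0 * pauliX 2 1 + pauliY 2 0 * pauliY 2 1) $$ (i,j) = (if (i=1\<and>j=2)\<or>(i=2\<and>j=1) then 2 else 0)"
proof -
  have "(pauliX 2 0 * pauliX 2 1 + pauliY 2 0 * pauliY 2 1) $$ (i,j) = (pauliX 2 0 * pauliX 2 1) $$ (i,j) + (pauliY 2 0 * pauliY 2 1) $$ (i,j)"
    by (rule index_add_mat) (use assms in simp_all)
  also have "\<dots> = (if j = flipq 1 (flipq 0 i) then 1 else 0) + (if j = flipq 1 (flipq 0 i) then (if bitv 0 i = bitv 1 i then -1 else 1) else 0)"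
    by (simp only: XX[OF assms] YY[OF assms])
  finally show ?thesis using assms
    apply -
    apply (drule less4_cases, drule less4_cases)
    apply (elim disjE; simp add: flips[simplified] bits[simplified])
    done
qed

lemma ham1: "hamK 1 J 0 = Hm (complex_of_real (2 * J 0 1))"
proof -
  have e: "{0..Suc 0} = {0,Suc 0}" "{0<..Suc 0} = {Suc 0}" "{Suc 0<..Suc 0} = {}" by auto
  have t: "Suc (Suc 0) = 2" by simp
  have h: "hamK 1 J 0 = jmat 4 4 (\<lambda>(r,c). of_real (J 0 1) * ((pauliX 2 0 * pauliX 2 1 + pauliY 2 0 * pauliY 2 1) $$ (r,c)))"
    unfolding Defs.hamK_def by (simp add: e t del: index_mult_mat index_add_mat)
  show ?thesis
  unfolding h
  apply (rule eq_matI)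
    apply (simp_all add: Hm_def XXYY[unfolded One_nat_def] del: index_mult_mat index_add_mat)
  done
qed

definition Pm :: "complex \<Rightarrow> nat \<Rightarrow> complex Matrix.mat" where
  "Pm b k = jmat 4 4 (\<lambda>(r,c). if r = c \<and> (r = 0 \<or> r = 3) then (if k = 0 then 1 else 0)
     else if r = c then (if even k then b^k else 0)
     else if (r=1\<and>c=2)\<or>(r=2\<and>c=1) then (if odd k then b^k else 0) else 0)"

lemma Hm_dims[simp]: "dim_row (Hm b) = 4" "dim_col (Hm b) = 4" "Hm b \<in> carrier_mat 4 4"
  by (simp_all add: Hm_def)

lemma Hm_pow: "Hm b ^\<^sub>m k = Pm b k"
proof (induction k)
  case 0
  show ?case by (rule eq_matI) (auto simp: Pm_def)
next
  case (Suc k)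
  show ?case unfolding pow_mat.simps Suc
    apply (rule eq_matI)
      apply (simp_all add: Pm_def Hm_def scalar_prod_def sum4)
    done
qed

definition chf :: "complex \<Rightarrow> complex" where "chf b = (exp b + exp (- b)) / 2"
definition shf :: "complex \<Rightarrow> complex" where "shf b = (exp b - exp (- b)) / 2"

definition Em :: "complex \<Rightarrow> complex Matrix.mat" where
  "Em b = jmat 4 4 (\<lambda>(r,c). if r = c \<and> (r = 0 \<or> r = 3) then 1
     else if r = c then chf b
     else if (r=1\<and>c=2)\<or>(r=2\<and>c=1) then shf b else 0)"

lemma exp_sums_c: "(\<lambda>n. b^n / fact n) sums exp (b::complex)"
  using exp_converges[of b] by (simp add: scaleR_conv_of_real divide_inverse mult.commute)

lemma even_sums: "(\<lambda>n. (if even n then b^n else 0) / fact n) sums chf b"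
proof -
  have "(\<lambda>n. (b^n / fact n + (-b)^n / fact n) / 2) sums ((exp b + exp (-b)) / 2)"
    by (intro sums_divide sums_add exp_sums_c)
  moreover have "(\<lambda>n. (b^n / fact n + (-b)^n / fact n) / 2) = (\<lambda>n. (if even n then b^n else 0) / fact n)"
    by (rule ext) (auto simp: add_divide_distrib[symmetric])
  ultimately show ?thesis by (simp add: chf_def)
qed

lemma odd_sums: "(\<lambda>n. (if odd n then b^n else 0) / fact n) sums shf b"
proof -
  have "(\<lambda>n. (b^n / fact n - (-b)^n / fact n) / 2) sums ((exp b - exp (-b)) / 2)"
    by (intro sums_divide sums_diff exp_sums_c)
  moreover have "(\<lambda>n. (b^n / fact n - (-b)^n / fact n) / 2) = (\<lambda>n. (if odd n then b^n else 0) / fact n)"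
    by (rule ext) (auto simp: diff_divide_distrib[symmetric])
  ultimately show ?thesis by (simp add: shf_def)
qed

lemma zero_sums: "(\<lambda>n. (if n = 0 then 1 else 0) / fact n :: complex) sums 1"
proof -
  have "(\<lambda>n. if n = 0 then (1::complex) else 0) sums 1" using sums_single[of 0 "\<lambda>_. 1::complex"] by simp
  moreover have "(\<lambda>n. (if n = 0 then 1 else 0) / fact n :: complex) = (\<lambda>n. if n = 0 then 1 else 0)"
    by (rule ext) auto
  ultimately show ?thesis by simp
qed

lemma mexp_Hm: "mexp (Hm b) = Em b"
  unfolding Defs.mexp_def Hm_pow
  apply (rule eq_matI)
    apply (simp_all add: Em_def)
  apply (simp add: Pm_def)
  apply (intro conjI impI)
  using sums_unique[OF zero_sums, symmetric] sums_unique[OF even_sums, symmetric] sums_unique[OF odd_sums, symmetric]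
  apply auto
  done

lemma smult_Hm: "c \<cdot>\<^sub>m Hm a = Hm (c * a)"
  by (rule eq_matI) (auto simp: Hm_def)

lemma chf_neg: "chf (- b) = chf b" by (simp add: chf_def add.commute)
lemma shf_neg: "shf (- b) = - shf b" by (simp add: shf_def field_simps)

lemma less2_cases: "(i::nat) < 2 \<Longrightarrow> i = 0 \<or> i = 1" by auto

lemma Em_dims[simp]: "dim_row (Em b) = 4" "dim_col (Em b) = 4" by (simp_all add: Em_def)

lemma chan_gen:
  assumes rho: "\<rho> \<in> carrier_mat 2 2"
  shows "ptrace_anc (Em b * kron \<rho> (anc_state u) * Em (- b)) =
    jmat 2 2 (\<lambda>(s,t). if s = 0 \<and> t = 0 then of_real u * \<rho> $$ (0,0) + (chf b)^2 * of_real (1-u) * \<rho> $$ (0,0) - (shf b)^2 * of_real u * \<rho> $$ (1,1)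
       else if s = 1 \<and> t = 1 then of_real (1-u) * \<rho> $$ (1,1) + (chf b)^2 * of_real u * \<rho> $$ (1,1) - (shf b)^2 * of_real (1-u) * \<rho> $$ (0,0)
       else chf b * \<rho> $$ (s,t))"
  using rho
  apply (intro eq_matI)
    apply (simp_all add: Defs.ptrace_anc_def)
  apply (drule less2_cases, drule less2_cases)
  apply (elim disjE)
     apply (simp_all add: Em_def Defs.kron_def Defs.anc_state_def scalar_prod_def sum4 chf_neg shf_neg power2_eq_square algebra_simps)
  done

lemma chf_i: "chf (- \<i> * x) = cos x"
  by (simp add: chf_def cos_exp_eq add.commute)

lemma shf_i: "shf (- \<i> * x) = - \<i> * sin x"
  by (simp add: shf_def sin_exp_eq field_simps)

lemma cs_c: "complex_of_real (cos y) * complex_of_real (cos y) = 1 - complex_of_real (sin y) * complex_of_real (sin y)"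
proof -
  have "cos y * cos y = 1 - sin y * sin y" using sin_cos_squared_add[of y] by (simp add: power2_eq_square)
  then have "complex_of_real (cos y * cos y) = complex_of_real (1 - sin y * sin y)" by simp
  then show ?thesis by simp
qed

definition Tm :: "real \<Rightarrow> real \<Rightarrow> complex Matrix.mat \<Rightarrow> complex Matrix.mat" where
  "Tm th u \<rho> = jmat 2 2 (\<lambda>(s,t). if s = t then of_real ((cos th)^2) * \<rho> $$ (s,s)
      + of_real ((sin th)^2 * (if s = 0 then u else 1 - u)) * (\<rho> $$ (0,0) + \<rho> $$ (1,1))
      else of_real (cos th) * \<rho> $$ (s,t))"

lemma chan1:
  assumes rho: "\<rho> \<in> carrier_mat 2 2"
  shows "chanK 1 J 0 1 u \<rho> = Tm (2 * J 0 1) u \<rho>"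
proof -
  define x where "x = complex_of_real (2 * J 0 1)"
  have a: "(- \<i> * complex_of_real 1) \<cdot>\<^sub>m hamK 1 J 0 = Hm (- \<i> * x)"
    unfolding ham1 smult_Hm x_def by simp
  have b: "(\<i> * complex_of_real 1) \<cdot>\<^sub>m hamK 1 J 0 = Hm (- (- \<i> * x))"
    unfolding ham1 smult_Hm x_def by simp
  have "chanK 1 J 0 1 u \<rho> = ptrace_anc (Em (- \<i> * x) * kron \<rho> (anc_state u) * Em (- (- \<i> * x)))"
    unfolding Defs.chanK_def a b mexp_Hm ..
  also have "\<dots> = Tm (2 * J 0 1) u \<rho>"
    unfolding chan_gen[OF rho] x_def chf_i shf_i cos_of_real sin_of_real Tm_def
    apply (rule eq_matI)
      apply simp_all
    apply (drule less2_cases, drule less2_cases)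
    apply (elim disjE)
       apply (simp_all add: power2_eq_square algebra_simps cs_c)
    done
  finally show ?thesis .
qed

lemma Tm_carrier[simp]: "Tm th u \<rho> \<in> carrier_mat 2 2"
  by (simp add: Tm_def)

lemma Tm_dims[simp]: "dim_row (Tm th u \<rho>) = 2" "dim_col (Tm th u \<rho>) = 2"
  by (simp_all add: Tm_def)

lemma Tm_entries:
  "Tm th u \<rho> $$ (0,0) = of_real ((cos th)^2) * \<rho> $$ (0,0) + of_real ((sin th)^2 * u) * (\<rho> $$ (0,0) + \<rho> $$ (1,1))"
  "Tm th u \<rho> $$ (1,1) = of_real ((cos th)^2) * \<rho> $$ (1,1) + of_real ((sin th)^2 * (1 - u)) * (\<rho> $$ (0,0) + \<rho> $$ (1,1))"
  "Tm th u \<rho> $$ (0,1) = of_real (cos th) * \<rho> $$ (0,1)"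
  "Tm th u \<rho> $$ (1,0) = of_real (cos th) * \<rho> $$ (1,0)"
  by (simp_all add: Tm_def)

definition zz :: "complex Matrix.mat \<Rightarrow> real" where "zz \<rho> = Re (\<rho> $$ (0,0) - \<rho> $$ (1,1))"
definition tt :: "complex Matrix.mat \<Rightarrow> complex" where "tt \<rho> = \<rho> $$ (0,0) + \<rho> $$ (1,1)"

lemma cs2_c: "(complex_of_real (cos th))^2 + (complex_of_real (sin th))^2 = 1"
  by (metis of_real_add of_real_power sin_cos_squared_add of_real_1 add.commute)

lemma tt_Tm: "tt (Tm th u \<rho>) = tt \<rho>"
proof -
  have "tt (Tm th u \<rho>) = \<rho> $$ (0,0) * ((complex_of_real (cos th))^2 + (complex_of_real (sin th))^2)
     + \<rho> $$ (1,1) * ((complex_of_real (cos th))^2 + (complex_of_real (sin th))^2)"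
    unfolding tt_def Tm_entries by (simp add: algebra_simps)
  then show ?thesis unfolding cs2_c tt_def by simp
qed

lemma zz_Tm: "tt \<rho> = 1 \<Longrightarrow> zz (Tm th u \<rho>) = (cos th)^2 * zz \<rho> + (1 - (cos th)^2) * (2 * u - 1)"
proof -
  assume t: "tt \<rho> = 1"
  have "zz (Tm th u \<rho>) = Re (of_real ((cos th)^2) * (\<rho> $$ (0,0) - \<rho> $$ (1,1)) + of_real ((sin th)^2 * (2*u - 1)) * tt \<rho>)"
    unfolding zz_def Tm_entries tt_def by (simp add: algebra_simps)
  also have "\<dots> = (cos th)^2 * zz \<rho> + (sin th)^2 * (2 * u - 1)"
    using t by (simp add: zz_def)
  finally show ?thesis by (simp add: sin_squared_eq)
qed

lemma sum2: "(\<Sum>k<2::nat. f k) = f 0 + f 1"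
  by (simp add: numeral_eq_Suc lessThan_Suc add_ac)

lemma zexp11: "\<rho> \<in> carrier_mat 2 2 \<Longrightarrow> zexp 1 1 \<rho> = zz \<rho>"
  unfolding Defs.zexp_def Defs.mtrace_def zz_def
  by (simp add: Defs.pauliZ_def scalar_prod_def sum2 Defs.bitv_def numeral_eq_Suc atLeast0LessThan lessThan_Suc)

lemma density_facts:
  assumes "Defs.density 2 \<rho>"
  shows "\<rho> \<in> carrier_mat 2 2" "tt \<rho> = 1" "\<bar>zz \<rho>\<bar> \<le> 1"
proof -
  have d: "\<rho> \<in> carrier_mat 2 2" "mtrace \<rho> = 1"
    and q: "\<And>x. Im (\<Sum>i<2. \<Sum>j<2. cnj (x i) * \<rho> $$ (i, j) * x j) = 0 \<and>
        Re (\<Sum>i<2. \<Sum>j<2. cnj (x i) * \<rho> $$ (i, j) * x j) \<ge> 0"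
    using assms unfolding Defs.density_def by auto
  show "\<rho> \<in> carrier_mat 2 2" by (fact d(1))
  show t: "tt \<rho> = 1" using d unfolding Defs.mtrace_def tt_def by (simp add: sum2)
  have a: "Re (\<rho> $$ (0,0)) \<ge> 0" using q[of "\<lambda>i. if i = 0 then 1 else 0"] by (simp add: sum2)
  have b: "Re (\<rho> $$ (1,1)) \<ge> 0" using q[of "\<lambda>i. if i = 1 then 1 else 0"] by (simp add: sum2)
  have c: "Re (\<rho> $$ (0,0)) + Re (\<rho> $$ (1,1)) = 1" using t unfolding tt_def
    by (metis one_complex.simps(1) plus_complex.simps(1))
  show "\<bar>zz \<rho>\<bar> \<le> 1" unfolding zz_def using a b c by simp
qed

lemma evolve_0: "evolve \<Phi> v 0 \<rho> = \<Phi> (v 0) \<rho>"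
  by (simp add: Defs.evolve_def)

lemma evolve_Suc: "evolve \<Phi> v (Suc s) \<rho> = evolve \<Phi> v s (\<Phi> (v (Suc s)) \<rho>)"
  by (simp add: Defs.evolve_def)

lemma evolve_chan:
  "\<rho> \<in> carrier_mat 2 2 \<Longrightarrow> evolve (chanK 1 J 0 1) v s \<rho> = evolve (Tm (2 * J 0 1)) v s \<rho>
     \<and> evolve (Tm (2 * J 0 1)) v s \<rho> \<in> carrier_mat 2 2"
proof (induction s arbitrary: \<rho>)
  case 0
  show ?case unfolding evolve_0 chan1[OF 0] by simp
next
  case (Suc s)
  have "chanK 1 J 0 1 (v (Suc s)) \<rho> = Tm (2 * J 0 1) (v (Suc s)) \<rho>" by (rule chan1[OF Suc.prems])
  then show ?case using Suc.IH[OF Tm_carrier] by (simp add: evolve_Suc)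
qed

lemma evolve_zz:
  "tt \<rho> = 1 \<Longrightarrow> zz (evolve (Tm th) v s \<rho>) =
     (\<Sum>m\<le>s. (1 - (cos th)^2) * ((cos th)^2)^m * (2 * v m - 1)) + ((cos th)^2)^(Suc s) * zz \<rho>"
proof (induction s arbitrary: \<rho>)
  case 0
  then show ?case by (simp add: evolve_0 zz_Tm)
next
  case (Suc s)
  have t: "tt (Tm th (v (Suc s)) \<rho>) = 1" using Suc.prems by (simp add: tt_Tm)
  show ?case
    unfolding evolve_Suc Suc.IH[OF t] zz_Tm[OF Suc.prems]
    by (simp add: algebra_simps)
qed

definition ell :: "real \<Rightarrow> (nat \<Rightarrow> real) \<Rightarrow> real" where
  "ell q v = (\<Sum>m. (1 - q) * q^m * (2 * v m - 1))"

lemma K1_bound: "v \<in> K1 \<Longrightarrow> \<bar>2 * v m - 1\<bar> \<le> (1::real)"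
proof -
  assume "v \<in> K1"
  then have "0 \<le> v m" "v m \<le> 1" by (auto simp: Defs.K1_def)
  then show ?thesis by (simp add: abs_le_iff)
qed

lemma ell_summable:
  assumes "0 \<le> q" "q < 1" "v \<in> K1"
  shows "summable (\<lambda>m. (1 - q) * q^m * (2 * v m - 1))"
proof (rule summable_comparison_test')
  show "summable (\<lambda>m. (1 - q) * q^m)"
    using assms by (intro summable_mult summable_geometric) auto
  fix m :: nat
  have "\<bar>(1 - q) * q^m * (2 * v m - 1)\<bar> = (1 - q) * q^m * \<bar>2 * v m - 1\<bar>"
    using assms by (simp add: abs_mult)
  also have "\<dots> \<le> (1 - q) * q^m * 1"
    using assms K1_bound[OF assms(3), of m] by (intro mult_left_mono) auto
  finally show "norm ((1 - q) * q^m * (2 * v m - 1)) \<le> (1 - q) * q^m" by simp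
qed

lemma sub_conv:
  assumes q: "q = (cos (2 * J 0 1))^2" "0 \<le> q" "q < 1" and v: "v \<in> K1"
    and d: "\<And>s. Defs.density 2 (\<rho>0 s)"
  shows "(\<lambda>s. zexp 1 1 (evolve (chanK 1 J 0 1) v s (\<rho>0 s))) \<longlonglongrightarrow> ell q v"
proof -
  have eq: "zexp 1 1 (evolve (chanK 1 J 0 1) v s (\<rho>0 s)) =
      (\<Sum>m\<le>s. (1 - q) * q^m * (2 * v m - 1)) + q^(Suc s) * zz (\<rho>0 s)" for s
  proof -
    note df = density_facts[OF d[of s]]
    have c: "evolve (chanK 1 J 0 1) v s (\<rho>0 s) = evolve (Tm (2 * J 0 1)) v s (\<rho>0 s)"
      and cc: "evolve (Tm (2 * J 0 1)) v s (\<rho>0 s) \<in> carrier_mat 2 2"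
      using evolve_chan[OF df(1)] by auto
    show ?thesis unfolding c zexp11[OF cc] evolve_zz[OF df(2)] q(1) ..
  qed
  have l1: "(\<lambda>s. \<Sum>m\<le>s. (1 - q) * q^m * (2 * v m - 1)) \<longlonglongrightarrow> ell q v"
    unfolding ell_def by (rule summable_LIMSEQ'[OF ell_summable[OF q(2,3) v]])
  have "(\<lambda>s. q^s) \<longlonglongrightarrow> 0" by (rule LIMSEQ_power_zero) (use q(2,3) in simp)
  from tendsto_mult[OF tendsto_const[of q] this]
  have g: "(\<lambda>s. q^(Suc s)) \<longlonglongrightarrow> 0" by simp
  have l2: "(\<lambda>s. q^(Suc s) * zz (\<rho>0 s)) \<longlonglongrightarrow> 0"
  proof (rule Lim_null_comparison[OF _ g])
    show "\<forall>\<^sub>F s in sequentially. norm (q^(Suc s) * zz (\<rho>0 s)) \<le> q^(Suc s)"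
    proof (rule always_eventually, rule allI)
      fix s
      have "norm (q^(Suc s) * zz (\<rho>0 s)) = q^(Suc s) * \<bar>zz (\<rho>0 s)\<bar>"
        using q(2) by (simp add: abs_mult)
      also have "\<dots> \<le> q^(Suc s) * 1"
        using density_facts(3)[OF d[of s]] q(2) by (intro mult_left_mono) auto
      finally show "norm (q^(Suc s) * zz (\<rho>0 s)) \<le> q^(Suc s)" by simp
    qed
  qed
  show ?thesis unfolding eq using tendsto_add[OF l1 l2] by simp
qed

lemma cmod_sq4: "(cmod ((complex_of_real x)^2))^2 = x ^ 4"
proof -
  have "cmod ((complex_of_real x)^2) = x^2" by (simp add: norm_power)
  then show ?thesis by (simp add: power_mult[symmetric])
qed

lemma hsnorm_Tm:
  assumes A: "A \<in> carrier_mat 2 2" and t: "tt A = 0"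
  shows "hsnorm (Tm th u A) \<le> \<bar>cos th\<bar> * hsnorm A"
proof -
  define c where "c = cos th"
  have c2: "c^2 \<le> 1" unfolding c_def by (simp add: cos_squared_eq)
  have z: "A $$ (0,0) + A $$ (1,1) = 0" using t by (simp add: tt_def)
  define a where "a = (cmod (A $$ (0,0)))^2"
  define b where "b = (cmod (A $$ (0,1)))^2"
  define d where "d = (cmod (A $$ (1,0)))^2"
  define f where "f = (cmod (A $$ (1,1)))^2"
  have nn: "0 \<le> a" "0 \<le> b" "0 \<le> d" "0 \<le> f" unfolding a_def b_def d_def f_def by auto
  have hA: "hsnorm A = sqrt (a + b + d + f)"
    using A unfolding Defs.hsnorm_def a_def b_def d_def f_def by (simp add: sum2)
  have hT: "hsnorm (Tm th u A) = sqrt ((c^2)^2 * a + c^2 * b + c^2 * d + (c^2)^2 * f)"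
    unfolding Defs.hsnorm_def a_def b_def d_def f_def c_def
    by (simp add: sum2 Tm_entries Tm_entries[unfolded One_nat_def] z z[unfolded One_nat_def] norm_mult power_mult_distrib cmod_sq4)
  have "(c^2)^2 * a + c^2 * b + c^2 * d + (c^2)^2 * f \<le> c^2 * (a + b + d + f)"
  proof -
    have "(c^2)^2 * a \<le> c^2 * a" "(c^2)^2 * f \<le> c^2 * f"
      using c2 nn by (auto simp: power2_eq_square intro!: mult_right_mono mult_left_le)
    then show ?thesis by (simp add: algebra_simps)
  qed
  then have "hsnorm (Tm th u A) \<le> sqrt (c^2 * (a + b + d + f))"
    unfolding hT by (rule real_sqrt_le_mono)
  also have "\<dots> = \<bar>c\<bar> * hsnorm A" unfolding hA by (simp add: real_sqrt_mult)
  finally show ?thesis unfolding c_def .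
qed

lemma contr:
  assumes q: "0 < q" "q < 1"
  shows "contractive_K 1 (\<lambda>_ _. arccos (sqrt q) / 2) 0 1"
  unfolding Defs.contractive_K_def
proof (intro exI[of _ "1 - sqrt q"] conjI ballI allI impI)
  show "0 < 1 - sqrt q" "1 - sqrt q \<le> 1" using q by auto
  fix u A assume "u \<in> {0..1::real}" and h: "hermitian_mat (2 ^ 1) A \<and> mtrace A = 0 \<and> A \<noteq> 0\<^sub>m (2 ^ 1) (2 ^ 1)"
  have A: "A \<in> carrier_mat 2 2" using h by (simp add: Defs.hermitian_mat_def)
  have t: "tt A = 0" using h A by (simp add: Defs.mtrace_def tt_def sum2)
  have cq: "cos (arccos (sqrt q)) = sqrt q" proof -
    have "0 \<le> sqrt q" "sqrt q \<le> 1" using q by auto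
    then show ?thesis by (intro cos_arccos) linarith+
  qed
  have ch: "chanK 1 (\<lambda>_ _. arccos (sqrt q) / 2) 0 1 u A = Tm (arccos (sqrt q)) u A"
    using chan1[OF A, of "\<lambda>_ _. arccos (sqrt q) / 2" u] by simp
  have hn: "hsnorm (Tm (arccos (sqrt q)) u A) \<le> sqrt q * hsnorm A"
    using hsnorm_Tm[OF A t, of "arccos (sqrt q)" u] cq q by simp
  have "hsnorm (Tm (arccos (sqrt q)) u A) / hsnorm A \<le> sqrt q"
  proof (cases "hsnorm A = 0")
    case True then show ?thesis using q by simp
  next
    case False
    have "0 \<le> hsnorm A" unfolding Defs.hsnorm_def by (simp add: sum_nonneg)
    with False have "hsnorm A > 0" by simp
    then show ?thesis using hn by (simp add: divide_le_eq)
  qed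
  then show "hsnorm (chanK 1 (\<lambda>_ _. arccos (sqrt q) / 2) 0 1 u A) / hsnorm A \<le> 1 - (1 - sqrt q)"
    unfolding ch by simp
qed

definition monoT :: "nat \<Rightarrow> (nat \<times> nat \<Rightarrow> nat) \<Rightarrow> (nat \<Rightarrow> real) \<Rightarrow> real" where
  "monoT N e X = (\<Prod>K<N. X K ^ e (K, 1))"

definition Pfun :: "nat \<Rightarrow> (nat \<Rightarrow> real) \<Rightarrow> (nat \<times> nat \<Rightarrow> nat) set \<Rightarrow> ((nat \<times> nat \<Rightarrow> nat) \<Rightarrow> real) \<Rightarrow> (nat \<Rightarrow> real) \<Rightarrow> real" where
  "Pfun N qs Mons c v = (\<Sum>e\<in>Mons. c e * monoT N e (\<lambda>K. ell (qs K) v))"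

lemma poly_out_1: "poly_out N (\<lambda>_. 1) Mons c x = (\<Sum>e\<in>Mons. c e * monoT N e (\<lambda>K. x (K, 1)))"
  unfolding Defs.poly_out_def monoT_def by simp

lemma Pfun_FS:
  assumes N: "N \<ge> 1" and M: "finite Mons" and q: "\<forall>K<N. 0 < qs K \<and> qs K < 1"
  shows "Pfun N qs Mons c \<in> FS"
  unfolding Defs.FS_def
proof (intro CollectI exI conjI)
  let ?J = "\<lambda>K (_::nat) (_::nat). arccos (sqrt (qs K)) / 2"
  show "N \<ge> 1" by (fact N)
  show "\<forall>K<N. (1::nat) \<le> (\<lambda>_. 1) K" by simp
  show "(0::real) < 1" by simp
  show "finite Mons" by (fact M)
  show "\<forall>K<N. contractive_K ((\<lambda>_. 1) K) (?J K) 0 1"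
    using contr q by simp
  show "sys_functional N (\<lambda>_. 1) ?J 0 1 Mons c (Pfun N qs Mons c)"
    unfolding Defs.sys_functional_def
  proof (intro ballI allI impI)
    fix v :: "nat \<Rightarrow> real" and \<rho>0 :: "nat \<Rightarrow> nat \<Rightarrow> complex Matrix.mat"
    assume v: "v \<in> K1" and d: "\<forall>s. \<forall>K<N. Defs.density (2 ^ (\<lambda>_. 1) K) (\<rho>0 s K)"
    have conv: "(\<lambda>s. zexp 1 1 (evolve (chanK 1 (?J K) 0 1) v s (\<rho>0 s K))) \<longlonglongrightarrow> ell (qs K) v"
      if K: "K < N" for K
    proof (rule sub_conv)
      have "0 \<le> sqrt (qs K)" "sqrt (qs K) \<le> 1" using q K by auto
      then have "cos (arccos (sqrt (qs K))) = sqrt (qs K)" by (intro cos_arccos) linarith+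
      moreover have "0 \<le> qs K" using q K by (auto simp: less_imp_le)
      ultimately show "qs K = (cos (2 * ?J K 0 1))^2" by simp
      show "0 \<le> qs K" "qs K < 1" using q K by auto
      show "v \<in> K1" by (fact v)
      show "\<And>s. Defs.density 2 (\<rho>0 s K)" using d K by simp
    qed
    show "(\<lambda>s. poly_out N (\<lambda>_. 1) Mons c (\<lambda>(K, j). zexp ((\<lambda>_. 1) K) j (evolve (chanK ((\<lambda>_. 1) K) (?J K) 0 1) v s (\<rho>0 s K))))
          \<longlonglongrightarrow> Pfun N qs Mons c v"
      unfolding poly_out_1 Pfun_def monoT_def
      apply (intro tendsto_intros)
      apply (simp only: prod.case)
      apply (rule conv)
      apply simp
      done
  qed
qed

lemma prod_split_add: fixes f :: "nat \<Rightarrow> 'a::comm_monoid_mult" and b :: nat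
  shows "(\<Prod>K<a+b. f K) = (\<Prod>K<a. f K) * (\<Prod>K<b. f (a + K))"
  by (induction b) (simp_all add: mult.assoc)

definition cat :: "nat \<Rightarrow> (nat \<Rightarrow> real) \<Rightarrow> (nat \<Rightarrow> real) \<Rightarrow> nat \<Rightarrow> real" where
  "cat N1 q1 q2 K = (if K < N1 then q1 K else q2 (K - N1))"

definition ext1 :: "nat \<Rightarrow> (nat \<times> nat \<Rightarrow> nat) \<Rightarrow> (nat \<times> nat \<Rightarrow> nat)" where
  "ext1 N1 e = (\<lambda>(K,j). if j = 1 then (if K < N1 then e (K,1) else 0) else if j = 0 then 0 else e (K, j - 2))"
definition ext2 :: "nat \<Rightarrow> (nat \<times> nat \<Rightarrow> nat) \<Rightarrow> (nat \<times> nat \<Rightarrow> nat)" where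
  "ext2 N1 e = (\<lambda>(K,j). if j = 1 then (if K < N1 then 0 else e (K - N1,1)) else if j = 0 then 1 else e (K, j - 2))"
definition dec :: "(nat \<times> nat \<Rightarrow> nat) \<Rightarrow> (nat \<times> nat \<Rightarrow> nat)" where
  "dec e = (\<lambda>(K,j). e (K, j + 2))"

lemma dec_ext: "dec (ext1 N1 e) = e" "dec (ext2 N1 e) = e"
  by (auto simp: dec_def ext1_def ext2_def)

lemma ext00: "ext1 N1 e (0,0) = 0" "ext2 N1 e (0,0) = 1"
  by (simp_all add: ext1_def ext2_def)

lemma mono_ext1: "monoT (N1 + N2) (ext1 N1 e) (\<lambda>K. ell (cat N1 q1 q2 K) v) = monoT N1 e (\<lambda>K. ell (q1 K) v)"
  unfolding monoT_def prod_split_add by (simp add: ext1_def cat_def)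

lemma mono_ext2: "monoT (N1 + N2) (ext2 N1 e) (\<lambda>K. ell (cat N1 q1 q2 K) v) = monoT N2 e (\<lambda>K. ell (q2 K) v)"
  unfolding monoT_def prod_split_add by (simp add: ext2_def cat_def)

lemma Pfun_add:
  assumes "finite M1" "finite M2"
  shows "Pfun (N1 + N2) (cat N1 q1 q2) (ext1 N1 ` M1 \<union> ext2 N1 ` M2)
     (\<lambda>e. if e (0,0) = 0 then c1 (dec e) else c2 (dec e)) v = Pfun N1 q1 M1 c1 v + Pfun N2 q2 M2 c2 v"
proof -
  let ?c = "\<lambda>e. if e (0,0) = 0 then c1 (dec e) else c2 (dec e)"
  let ?g = "\<lambda>e. ?c e * monoT (N1 + N2) e (\<lambda>K. ell (cat N1 q1 q2 K) v)"
  have ne: "ext1 N1 a \<noteq> ext2 N1 b" for a b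
  proof
    assume "ext1 N1 a = ext2 N1 b"
    then have "ext1 N1 a (0,0) = ext2 N1 b (0,0)" by simp
    then show False by (simp add: ext1_def ext2_def)
  qed
  have disj: "ext1 N1 ` M1 \<inter> ext2 N1 ` M2 = {}" using ne by blast
  have i1: "inj_on (ext1 N1) M1" by (rule inj_on_inverseI[where g = dec]) (simp add: dec_ext)
  have i2: "inj_on (ext2 N1) M2" by (rule inj_on_inverseI[where g = dec]) (simp add: dec_ext)
  have "Pfun (N1 + N2) (cat N1 q1 q2) (ext1 N1 ` M1 \<union> ext2 N1 ` M2) ?c v = sum ?g (ext1 N1 ` M1) + sum ?g (ext2 N1 ` M2)"
    unfolding Pfun_def using assms disj by (intro sum.union_disjoint) auto
  also have "sum ?g (ext1 N1 ` M1) = sum (?g \<circ> ext1 N1) M1" by (rule sum.reindex[OF i1])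
  also have "\<dots> = Pfun N1 q1 M1 c1 v" unfolding Pfun_def
    by (rule sum.cong) (auto simp: mono_ext1 dec_ext ext00)
  also have "sum ?g (ext2 N1 ` M2) = sum (?g \<circ> ext2 N1) M2" by (rule sum.reindex[OF i2])
  also have "\<dots> = Pfun N2 q2 M2 c2 v" unfolding Pfun_def
    by (rule sum.cong) (auto simp: mono_ext2 dec_ext ext00)
  finally show ?thesis .
qed

definition extp :: "nat \<Rightarrow> (nat \<times> nat \<Rightarrow> nat) \<times> (nat \<times> nat \<Rightarrow> nat) \<Rightarrow> (nat \<times> nat \<Rightarrow> nat)" where
  "extp N1 p = (\<lambda>(K,j). if j = 1 then (if K < N1 then fst p (K,1) else snd p (K - N1,1)) else if j = 0 then 0
      else if even K then fst p (K div 2, j - 2) else snd p (K div 2, j - 2))"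
definition dec1 :: "(nat \<times> nat \<Rightarrow> nat) \<Rightarrow> (nat \<times> nat \<Rightarrow> nat)" where
  "dec1 e = (\<lambda>(K,j). e (2 * K, j + 2))"
definition dec2 :: "(nat \<times> nat \<Rightarrow> nat) \<Rightarrow> (nat \<times> nat \<Rightarrow> nat)" where
  "dec2 e = (\<lambda>(K,j). e (2 * K + 1, j + 2))"

lemma dec_extp: "dec1 (extp N1 p) = fst p" "dec2 (extp N1 p) = snd p"
  by (auto simp: dec1_def dec2_def extp_def)

lemma mono_extp: "monoT (N1 + N2) (extp N1 p) (\<lambda>K. ell (cat N1 q1 q2 K) v) =
    monoT N1 (fst p) (\<lambda>K. ell (q1 K) v) * monoT N2 (snd p) (\<lambda>K. ell (q2 K) v)"
  unfolding monoT_def prod_split_add by (simp add: extp_def cat_def)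

lemma Pfun_mult:
  assumes "finite M1" "finite M2"
  shows "Pfun (N1 + N2) (cat N1 q1 q2) (extp N1 ` (M1 \<times> M2))
     (\<lambda>e. c1 (dec1 e) * c2 (dec2 e)) v = Pfun N1 q1 M1 c1 v * Pfun N2 q2 M2 c2 v"
proof -
  let ?g = "\<lambda>e. c1 (dec1 e) * c2 (dec2 e) * monoT (N1 + N2) e (\<lambda>K. ell (cat N1 q1 q2 K) v)"
  have i: "inj_on (extp N1) (M1 \<times> M2)"
    by (rule inj_on_inverseI[where g = "\<lambda>e. (dec1 e, dec2 e)"]) (simp add: dec_extp)
  have "Pfun (N1 + N2) (cat N1 q1 q2) (extp N1 ` (M1 \<times> M2)) (\<lambda>e. c1 (dec1 e) * c2 (dec2 e)) v
      = sum (?g \<circ> extp N1) (M1 \<times> M2)" unfolding Pfun_def by (rule sum.reindex[OF i])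
  also have "\<dots> = (\<Sum>(e1,e2)\<in>M1 \<times> M2. (c1 e1 * monoT N1 e1 (\<lambda>K. ell (q1 K) v)) * (c2 e2 * monoT N2 e2 (\<lambda>K. ell (q2 K) v)))"
    by (rule sum.cong) (auto simp: dec_extp mono_extp)
  also have "\<dots> = (\<Sum>e1\<in>M1. \<Sum>e2\<in>M2. (c1 e1 * monoT N1 e1 (\<lambda>K. ell (q1 K) v)) * (c2 e2 * monoT N2 e2 (\<lambda>K. ell (q2 K) v)))"
    by (rule sum.cartesian_product[symmetric])
  also have "\<dots> = Pfun N1 q1 M1 c1 v * Pfun N2 q2 M2 c2 v"
    unfolding Pfun_def by (rule sum_product[symmetric])
  finally show ?thesis .
qed

lemma coord_cont: "continuous_on A (\<lambda>v::nat \<Rightarrow> real. v i)"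
  by (rule continuous_on_subset[OF continuous_on_product_coordinates]) simp

lemma ell_cont:
  assumes q: "0 \<le> q" "q < 1"
  shows "continuous_on K1 (ell q)"
proof -
  have ul: "uniform_limit K1 (\<lambda>n v. \<Sum>i<n. (1 - q) * q^i * (2 * v i - 1)) (\<lambda>v. suminf (\<lambda>i. (1 - q) * q^i * (2 * v i - 1))) sequentially"
  proof (rule Weierstrass_m_test)
    show "summable (\<lambda>i. (1 - q) * q^i)" using q by (intro summable_mult summable_geometric) auto
    fix n v assume v: "v \<in> K1"
    have "\<bar>(1 - q) * q^n * (2 * v n - 1)\<bar> = (1 - q) * q^n * \<bar>2 * v n - 1\<bar>"
      using q by (simp add: abs_mult)
    also have "\<dots> \<le> (1 - q) * q^n * 1"
      using q K1_bound[OF v, of n] by (intro mult_left_mono) auto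
    finally show "norm ((1 - q) * q^n * (2 * v n - 1)) \<le> (1 - q) * q^n" by simp
  qed
  have "continuous_on K1 (\<lambda>v. suminf (\<lambda>i. (1 - q) * q^i * (2 * v i - 1)))"
  proof (rule uniform_limit_theorem[OF _ ul])
    show "\<forall>\<^sub>F n in sequentially. continuous_on K1 (\<lambda>v. \<Sum>i<n. (1 - q) * q^i * (2 * v i - 1))"
      by (intro always_eventually allI continuous_intros coord_cont)
  qed simp
  moreover have "ell q = (\<lambda>v. suminf (\<lambda>i. (1 - q) * q^i * (2 * v i - 1)))"
    by (rule ext) (simp add: ell_def)
  ultimately show ?thesis by simp
qed

lemma Pfun_cont:
  assumes q: "\<forall>K<N. 0 < qs K \<and> qs K < 1"
  shows "continuous_on K1 (Pfun N qs Mons c)"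
proof -
  have e: "Pfun N qs Mons c = (\<lambda>v. \<Sum>e\<in>Mons. c e * (\<Prod>K<N. ell (qs K) v ^ e (K, 1)))"
    by (rule ext) (simp add: Pfun_def monoT_def)
  show ?thesis unfolding e
    using q by (intro continuous_on_sum continuous_on_mult continuous_on_const continuous_on_prod continuous_on_power ell_cont) auto
qed

lemma sep_ell:
  assumes x: "x \<in> K1" and y: "y \<in> K1" and xy: "x \<noteq> y"
  shows "\<exists>q. 0 < q \<and> q < 1 \<and> ell q x \<noteq> ell q y"
proof (rule ccontr)
  assume "\<not> ?thesis"
  then have H: "\<And>q. 0 < q \<Longrightarrow> q < 1 \<Longrightarrow> ell q x = ell q y" by auto
  define d where "d m = x m - y m" for m
  have db: "\<bar>d m\<bar> \<le> 1" for m
  proof -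
    have "0 \<le> x m" "x m \<le> 1" "0 \<le> y m" "y m \<le> 1" using x y by (auto simp: Defs.K1_def)
    then show ?thesis by (simp add: d_def abs_le_iff)
  qed
  from xy obtain m1 where "x m1 \<noteq> y m1" by auto
  then have "d m1 \<noteq> 0" by (simp add: d_def)
  define m0 where "m0 = (LEAST m. d m \<noteq> 0)"
  have dm0: "d m0 \<noteq> 0" unfolding m0_def by (rule LeastI) (fact)
  have low: "d m = 0" if "m < m0" for m using not_less_Least[OF that[unfolded m0_def]] by simp
  have key: "\<bar>d m0\<bar> \<le> q / (1 - q)" if q: "0 < q" "q < 1" for q
  proof -
    define g where "g m = q^m * d m" for m
    have gb: "norm (g m) \<le> q^m" for m
    proof -
      have "norm (g m) = q^m * \<bar>d m\<bar>" using q by (simp add: g_def abs_mult)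
      also have "\<dots> \<le> q^m * 1" using q db[of m] by (intro mult_left_mono) auto
      finally show ?thesis by simp
    qed
    have sg: "summable g" by (rule summable_comparison_test'[OF summable_geometric[of q] gb]) (use q in auto)
    have "0 = ell q x - ell q y" using H[OF q] by simp
    also have "\<dots> = (\<Sum>m. (1 - q) * q^m * (2 * x m - 1) - (1 - q) * q^m * (2 * y m - 1))"
    proof -
      have s1: "summable (\<lambda>m. (1 - q) * q^m * (2 * x m - 1))" using ell_summable[OF _ q(2) x] q by simp
      have s2: "summable (\<lambda>m. (1 - q) * q^m * (2 * y m - 1))" using ell_summable[OF _ q(2) y] q by simp
      show ?thesis unfolding ell_def by (rule suminf_diff[OF s1 s2])
    qed
    also have "\<dots> = (\<Sum>m. (2 * (1 - q)) * g m)"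
      by (rule suminf_cong) (simp add: g_def d_def algebra_simps)
    also have "\<dots> = (2 * (1 - q)) * suminf g" by (rule suminf_mult[OF sg])
    finally have g0: "suminf g = 0" using q by simp
    define h where "h n = q^n * d (n + m0)" for n
    have hb: "norm (h n) \<le> q^n" for n
    proof -
      have "norm (h n) = q^n * \<bar>d (n + m0)\<bar>" using q by (simp add: h_def abs_mult)
      also have "\<dots> \<le> q^n * 1" using q db[of "n + m0"] by (intro mult_left_mono) auto
      finally show ?thesis by simp
    qed
    have sh: "summable h" by (rule summable_comparison_test'[OF summable_geometric[of q] hb]) (use q in auto)
    have "suminf g = (\<Sum>n. g (n + m0)) + (\<Sum>i<m0. g i)" by (rule suminf_split_initial_segment[OF sg])
    also have "(\<Sum>i<m0. g i) = 0" by (rule sum.neutral) (simp add: g_def low)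
    also have "(\<Sum>n. g (n + m0)) = (\<Sum>n. q^m0 * h n)"
      by (rule suminf_cong) (simp add: g_def h_def power_add)
    also have "\<dots> = q^m0 * suminf h" by (rule suminf_mult[OF sh])
    finally have h0: "suminf h = 0" using g0 q by simp
    have "(\<Sum>n. h (Suc n)) = suminf h - h 0" by (rule suminf_split_head[OF sh])
    then have hs: "(\<Sum>n. h (Suc n)) = - d m0" using h0 by (simp add: h_def)
    have sq: "summable (\<lambda>n. q^(Suc n))" using q by (simp add: summable_geometric)
    have "norm (\<Sum>n. h (Suc n)) \<le> (\<Sum>n. q^(Suc n))"
      by (rule norm_suminf_le[OF hb sq])
    also have "(\<Sum>n. q^(Suc n)) = q * (\<Sum>n. q^n)"
      using suminf_mult[OF summable_geometric[of q], of q] q by simp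
    also have "\<dots> = q / (1 - q)" using q by (simp add: suminf_geometric)
    finally show ?thesis using hs by simp
  qed
  define q where "q = min (1/2) (\<bar>d m0\<bar> / 4)"
  have q0: "0 < q" "q \<le> 1/2" "q \<le> \<bar>d m0\<bar> / 4" using dm0 by (auto simp: q_def)
  then have q1: "q < 1" by simp
  have "q \<le> 2 * q * (1 - q)"
  proof -
    have "0 \<le> q * (1 - 2 * q)" using q0 by (intro mult_nonneg_nonneg) auto
    then show ?thesis by (simp add: algebra_simps)
  qed
  then have "q / (1 - q) \<le> 2 * q" using q1 by (simp add: divide_le_eq)
  then have "\<bar>d m0\<bar> \<le> 2 * q" using key[OF q0(1) q1] by simp
  then show False using q0 dm0 by simp
qed

lemma K1_PiE: "K1 = PiE UNIV (\<lambda>_. {0..1::real})"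
  by (auto simp: Defs.K1_def PiE_def extensional_def)

lemma compact_K1: "compact K1"
proof -
  have "compactin (product_topology (\<lambda>_. euclidean) UNIV) (PiE UNIV (\<lambda>_::nat. {0..1::real}))"
    by (simp add: compactin_PiE compactin_euclidean_iff)
  then show ?thesis unfolding K1_PiE euclidean_product_topology compactin_euclidean_iff .
qed

lemma f_cont:
  assumes w: "null_seq w" and fc: "cont_w w f"
  shows "continuous_on K1 f"
  unfolding continuous_on_topological
proof (intro ballI allI impI)
  fix u B assume u: "u \<in> K1" and B: "open B" "f u \<in> B"
  obtain e where e: "e > 0" "ball (f u) e \<subseteq> B" using B openE by blast
  obtain \<delta> where d: "\<delta> > 0" "\<And>v. v \<in> K1 \<Longrightarrow> wnorm w (\<lambda>m. v m - u m) < \<delta> \<Longrightarrow> \<bar>f v - f u\<bar> < e"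
    using fc u e(1) unfolding Defs.cont_w_def by blast
  have wpos: "\<And>k. 0 < w k" and w1: "\<And>k. w k \<le> 1" and wl: "w \<longlonglongrightarrow> 0"
    using w unfolding Defs.null_seq_def by auto
  have "\<forall>\<^sub>F m in sequentially. w m < \<delta> / 2" by (rule order_tendstoD(2)[OF wl]) (use d(1) in simp)
  then obtain M where M: "\<And>m. m \<ge> M \<Longrightarrow> w m < \<delta> / 2" by (auto simp: eventually_sequentially)
  define A where "A = (\<Inter>m\<in>{..<M}. (\<lambda>v::nat \<Rightarrow> real. v m) -` ball (u m) (\<delta> / 2))"
  show "\<exists>A. open A \<and> u \<in> A \<and> (\<forall>y\<in>K1. y \<in> A \<longrightarrow> f y \<in> B)"
  proof (intro exI conjI ballI impI)
    show "open A" unfolding A_def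
      by (intro open_INT ballI open_vimage open_ball continuous_on_product_coordinates) simp
    show "u \<in> A" unfolding A_def using d(1) by simp
    fix y assume y: "y \<in> K1" "y \<in> A"
    have "wnorm w (\<lambda>m. y m - u m) \<le> \<delta> / 2"
      unfolding Defs.wnorm_def
    proof (rule cSUP_least)
      fix m
      show "\<bar>y m - u m\<bar> * w m \<le> \<delta> / 2"
      proof (cases "m < M")
        case True
        then have "dist (u m) (y m) < \<delta> / 2" using y(2) unfolding A_def by auto
        then have a: "\<bar>y m - u m\<bar> < \<delta> / 2" by (simp add: dist_real_def abs_minus_commute)
        have "\<bar>y m - u m\<bar> * w m \<le> \<bar>y m - u m\<bar> * 1" using w1[of m] by (intro mult_left_mono) auto
        then show ?thesis using a by simp
      next
        case False
        have "0 \<le> y m" "y m \<le> 1" "0 \<le> u m" "u m \<le> 1" using y(1) u by (auto simp: Defs.K1_def)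
        then have "\<bar>y m - u m\<bar> \<le> 1" by (simp add: abs_le_iff)
        then have "\<bar>y m - u m\<bar> * w m \<le> 1 * w m" using wpos[of m] by (intro mult_right_mono) auto
        then show ?thesis using M[of m] False by simp
      qed
    qed simp
    then have "wnorm w (\<lambda>m. y m - u m) < \<delta>" using d(1) by simp
    then have "\<bar>f y - f u\<bar> < e" using d(2)[OF y(1)] by simp
    then have "f y \<in> ball (f u) e" by (simp add: dist_real_def abs_minus_commute)
    then show "f y \<in> B" using e(2) by blast
  qed
qed

definition Rset :: "((nat \<Rightarrow> real) \<Rightarrow> real) set" where
  "Rset = {g. \<exists>N qs Mons c. N \<ge> 1 \<and> finite Mons \<and> (\<forall>K<N. 0 < qs K \<and> qs K < 1) \<and> g = Pfun N qs Mons c}"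

lemma cat_range: "\<forall>K<N1. 0 < q1 K \<and> q1 K < 1 \<Longrightarrow> \<forall>K<N2. 0 < q2 K \<and> q2 K < 1 \<Longrightarrow>
   \<forall>K<N1 + N2. 0 < cat N1 q1 q2 K \<and> cat N1 q1 q2 K < 1"
  by (auto simp: cat_def)

lemma Rset_ring: "function_ring_on Rset K1"
proof
  show "compact K1" by (fact compact_K1)
next
  fix g assume "g \<in> Rset"
  then show "continuous_on K1 g" unfolding Rset_def using Pfun_cont by auto
next
  fix f g assume "f \<in> Rset" "g \<in> Rset"
  then obtain N1 q1 M1 c1 N2 q2 M2 c2 where
    h1: "N1 \<ge> 1" "finite M1" "\<forall>K<N1. 0 < q1 K \<and> q1 K < 1" "f = Pfun N1 q1 M1 c1" and
    h2: "N2 \<ge> 1" "finite M2" "\<forall>K<N2. 0 < q2 K \<and> q2 K < 1" "g = Pfun N2 q2 M2 c2"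
    unfolding Rset_def by blast
  have N12: "N1 + N2 \<ge> 1" using h1 by simp
  have fin1: "finite (ext1 N1 ` M1 \<union> ext2 N1 ` M2)" using h1 h2 by simp
  have fin2: "finite (extp N1 ` (M1 \<times> M2))" using h1 h2 by simp
  have "(\<lambda>x. f x + g x) = Pfun (N1 + N2) (cat N1 q1 q2) (ext1 N1 ` M1 \<union> ext2 N1 ` M2)
     (\<lambda>e. if e (0,0) = 0 then c1 (dec e) else c2 (dec e))"
    by (rule ext) (simp add: Pfun_add h1 h2)
  then show "(\<lambda>x. f x + g x) \<in> Rset" unfolding Rset_def
    using h1 h2 fin1 cat_range[OF h1(3) h2(3)] N12 by blast
  have "(\<lambda>x. f x * g x) = Pfun (N1 + N2) (cat N1 q1 q2) (extp N1 ` (M1 \<times> M2))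
     (\<lambda>e. c1 (dec1 e) * c2 (dec2 e))"
    by (rule ext) (simp add: Pfun_mult h1 h2)
  then show "(\<lambda>x. f x * g x) \<in> Rset" unfolding Rset_def
    using h1 h2 fin2 cat_range[OF h1(3) h2(3)] N12 by blast
next
  fix a :: real
  have "(\<lambda>_. a) = Pfun 1 (\<lambda>_. 1/2) {\<lambda>_. 0} (\<lambda>_. a)"
    by (rule ext) (simp add: Pfun_def monoT_def)
  then show "(\<lambda>_. a) \<in> Rset" unfolding Rset_def mem_Collect_eq
    by (intro exI[of _ 1] exI[of _ "\<lambda>_. 1/2"] exI[of _ "{\<lambda>_. 0}"] exI[of _ "\<lambda>_. a"]) simp
next
  fix x y assume "x \<in> K1" "y \<in> K1" "x \<noteq> y"
  then obtain q where q: "0 < q" "q < 1" "ell q x \<noteq> ell q y" using sep_ell by blast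
  have "ell q = Pfun 1 (\<lambda>_. q) {\<lambda>_. 1} (\<lambda>_. 1)"
    by (rule ext) (simp add: Pfun_def monoT_def)
  moreover have "Pfun 1 (\<lambda>_. q) {\<lambda>_. 1} (\<lambda>_. 1) \<in> Rset"
  proof -
    show ?thesis unfolding Rset_def mem_Collect_eq
      by (intro exI[of _ 1] exI[of _ "\<lambda>_. q"] exI[of _ "{\<lambda>_. 1}"] exI[of _ "\<lambda>_. 1"]) (use q in simp)
  qed
  ultimately show "\<exists>f\<in>Rset. f x \<noteq> f y" using q by metis
qed

theorem proposition1:
  fixes w :: "nat \<Rightarrow> real" and f :: "(nat \<Rightarrow> real) \<Rightarrow> real"
  assumes "null_seq w" and "cont_w w f"
  shows "\<forall>e>0. \<exists>F\<in>FS. \<forall>v\<in>K1. \<bar>F v - f v\<bar> < e"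
proof (intro allI impI)
  fix e :: real assume e: "e > 0"
  have fc: "continuous_on K1 f" by (rule f_cont[OF assms])
  obtain g where g: "g \<in> Rset" "\<forall>x\<in>K1. \<bar>f x - g x\<bar> < e"
    using function_ring_on.Stone_Weierstrass_basic[OF Rset_ring fc e] by blast
  have "g \<in> FS" using g(1) unfolding Rset_def using Pfun_FS by auto
  then show "\<exists>F\<in>FS. \<forall>v\<in>K1. \<bar>F v - f v\<bar> < e"
    using g(2) by (intro bexI[of _ g]) (auto simp: abs_minus_commute)
qed
end
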